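(* Let $n\ge5$ be odd, $k=\frac{n-3}{2}$, and let $V$ be an $n$-element set with $V=\{v_1,\dots,v_{2k+1},s,t\}$. Define $a\colon V^+\times V^-\to\mathbb{Z}$ (where $V^\pm=\{v^\pm\colon v\in V\}$) by $a(u^+,u^-)=0$ for $u\in V$; $a(v_i^+,v_j^-)=\bigl|2k+1-2|i-j|\bigr|$ for $i\ne j$; $a(u^+,v^-)=k$ if exactly one of $u,v$ lies in $\{s,t\}$; and $a(s^+,t^-)=a(t^+,s^-)=1$. Let $\mu\in\mathbb{R}\setminus\{0\}$ and $\lambda\in\mathbb{R}^{V^+\cup V^-}$, and define $a^{\mu,\lambda}(u^+,v^-)=\mu\, a(u^+,v^-)+\lambda_{u^+}+\lambda_{v^-}$ for all $u,v\in V$. If all entries $a^{\mu,\lambda}(u^+,v^-)$ are integers, then (1) $\max_{u,v\in V}|a^{\mu,\lambda}(u^+,v^-)|\ge\frac{n-4}{2}$, and (2) the number of distinct values among $\{a^{\mu,\lambda}(u^+,v^-)\colon u,v\in V\}$ is at least $\sqrt{\frac{n-1}{2}}$.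
   Context: The function $a$ is the coefficient vector (indexed by the edges $\{u^+,v^-\}$ of the complete bipartite graph on $V^+\cup V^-$) of the canonical transformation of the constraint for the dominant of the odd cycle polytope of $K_n$ induced by the cycle $(v_1,\dots,v_{2k+1})$; the vectors $a^{\mu,\lambda}$ are exactly the coefficient vectors obtained from it by scaling with $\mu$ and adding linear combinations of the degree equations $y(\delta(w))=1$. *)

theory Defs
  imports "HOL-Analysis.Analysis"
begin

datatype vtx = Cyc nat | S | T

definition Vset :: "nat \<Rightarrow> vtx set" where
  "Vset k = (Cyc ` {1..2*k+1}) \<union> {S, T}"

fun acoef :: "nat \<Rightarrow> vtx \<Rightarrow> vtx \<Rightarrow> int" where
  "acoef k (Cyc i) (Cyc j) =
     (if i = j then 0 else \<bar>2 * int k + 1 - 2 * \<bar>int i - int j\<bar>\<bar>)"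
| "acoef k S S = 0"
| "acoef k T T = 0"
| "acoef k S T = 1"
| "acoef k T S = 1"
| "acoef k (Cyc i) S = int k"
| "acoef k (Cyc i) T = int k"
| "acoef k S (Cyc j) = int k"
| "acoef k T (Cyc j) = int k"

text \<open>a^{\<mu>,\<lambda>}(u^+, v^-) = \<mu> a(u^+,v^-) + \<lambda>_{u^+} + \<lambda>_{v^-};
  \<lambda> on V^+ \<union> V^- is given by the pair (lp, lm).\<close>
definition amulam :: "nat \<Rightarrow> real \<Rightarrow> (vtx \<Rightarrow> real) \<Rightarrow> (vtx \<Rightarrow> real) \<Rightarrow> vtx \<Rightarrow> vtx \<Rightarrow> real" where
  "amulam k \<mu> lp lm u v = \<mu> * of_int (acoef k u v) + lp u + lm v"

end

theory Submission
  imports Defs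
begin

theorem lemma14:
  fixes n k :: nat and \<mu> :: real and lp lm :: "vtx \<Rightarrow> real"
  assumes "n \<ge> 5" and "odd n" and "k = (n - 3) div 2"
    and "\<mu> \<noteq> 0"
    and "\<forall>u\<in>Vset k. \<forall>v\<in>Vset k. amulam k \<mu> lp lm u v \<in> \<int>"
  shows "(MAX p \<in> Vset k \<times> Vset k. \<bar>amulam k \<mu> lp lm (fst p) (snd p)\<bar>) \<ge> (real n - 4) / 2
         \<and> real (card {amulam k \<mu> lp lm u v | u v. u \<in> Vset k \<and> v \<in> Vset k})
           \<ge> sqrt ((real n - 1) / 2)"
proof -
  define b where "b = amulam k \<mu> lp lm"
  define V where "V = Vset k"
  have bdef: "\<And>u v. b u v = \<mu> * of_int (acoef k u v) + lp u + lm v"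
    unfolding b_def amulam_def by simp
  have nk: "n = 2*k+3" using assms(1-3) by presburger
  have k1: "k \<ge> 1" using nk assms(1) by simp
  have inV: "S \<in> V" "T \<in> V" "Cyc 1 \<in> V" "Cyc 2 \<in> V" using k1 by (auto simp: V_def Vset_def)
  have CycV: "\<And>j. 1 \<le> j \<Longrightarrow> j \<le> 2*k+1 \<Longrightarrow> Cyc j \<in> V" by (auto simp: V_def Vset_def)
  have intb: "\<And>u v. u \<in> V \<Longrightarrow> v \<in> V \<Longrightarrow> b u v \<in> \<int>"
    using assms(5) unfolding b_def V_def by blast
  have mueq: "\<mu> = b S T + b (Cyc 1) S - b S S - b (Cyc 1) T"
    by (simp add: bdef)
  have "\<mu> \<in> \<int>" unfolding mueq using intb inV
    by (intro Ints_add Ints_diff) auto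
  then obtain z where z: "\<mu> = of_int z" by (auto elim: Ints_cases)
  have "z \<noteq> 0" using z assms(4) by auto
  hence "\<bar>z\<bar> \<ge> 1" by simp
  hence mu1: "\<bar>\<mu>\<bar> \<ge> 1" using z by (metis of_int_1_le_iff of_int_abs)
  have finV: "finite V" by (simp add: V_def Vset_def)
  have a12: "acoef k (Cyc 1) (Cyc 2) = 2*int k - 1" "acoef k (Cyc 2) (Cyc 1) = 2*int k - 1"
    using k1 by auto
  have key: "b (Cyc 1) (Cyc 2) + b (Cyc 2) (Cyc 1) - b (Cyc 1) (Cyc 1) - b (Cyc 2) (Cyc 2)
      = 2 * \<mu> * (2 * real k - 1)"
    using k1 by (simp add: bdef a12 algebra_simps)
  have "\<bar>2 * \<mu> * (2 * real k - 1)\<bar> \<ge> 2 * (2 * real k - 1)"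
  proof -
    have "\<bar>2 * \<mu> * (2 * real k - 1)\<bar> = 2 * \<bar>\<mu>\<bar> * (2 * real k - 1)"
      using k1 by (simp add: abs_mult)
    also have "\<dots> \<ge> 2 * 1 * (2 * real k - 1)"
      using mu1 k1 by (intro mult_right_mono mult_left_mono) auto
    finally show ?thesis by simp
  qed
  hence "\<bar>b (Cyc 1) (Cyc 2)\<bar> + \<bar>b (Cyc 2) (Cyc 1)\<bar> + \<bar>b (Cyc 1) (Cyc 1)\<bar> + \<bar>b (Cyc 2) (Cyc 2)\<bar>
      \<ge> 2 * (2 * real k - 1)" using key by linarith
  note sum4 = this
  have "\<exists>p\<in>{(Cyc 1, Cyc 2), (Cyc 2, Cyc 1), (Cyc 1, Cyc 1), (Cyc 2, Cyc 2)}.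
      \<bar>b (fst p) (snd p)\<bar> \<ge> (2 * real k - 1) / 2"
  proof (rule ccontr)
    assume "\<not> ?thesis"
    hence "\<bar>b (Cyc 1) (Cyc 2)\<bar> < (2 * real k - 1) / 2" "\<bar>b (Cyc 2) (Cyc 1)\<bar> < (2 * real k - 1) / 2"
      "\<bar>b (Cyc 1) (Cyc 1)\<bar> < (2 * real k - 1) / 2" "\<bar>b (Cyc 2) (Cyc 2)\<bar> < (2 * real k - 1) / 2"
      by auto
    thus False using sum4 by linarith
  qed
  then obtain p where p: "p \<in> V \<times> V" "\<bar>b (fst p) (snd p)\<bar> \<ge> (2 * real k - 1) / 2"
    using inV by auto
  have "\<bar>b (fst p) (snd p)\<bar> \<le> (MAX p \<in> V \<times> V. \<bar>b (fst p) (snd p)\<bar>)"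
    using p finV by (intro Max_ge) auto
  hence P1: "(MAX p \<in> V \<times> V. \<bar>b (fst p) (snd p)\<bar>) \<ge> (real n - 4) / 2"
    using p nk by simp
  define D where "D = {b u v | u v. u \<in> V \<and> v \<in> V}"
  have D_img: "D = (\<lambda>(u,v). b u v) ` (V \<times> V)" unfolding D_def by auto
  have finD: "finite D" unfolding D_img using finV by simp
  define g where "g j = (if j = 0 then S else Cyc (j+1))" for j :: nat
  define c where "c j = (if j = 0 then int k else int k + 1 - 2 * int j)" for j :: nat
  define f where "f j = b (Cyc 1) (g j) - b S (g j)" for j
  have fc: "f j = \<mu> * of_int (c j) + (lp (Cyc 1) - lp S)" if "j \<le> k" for j
  proof (cases "j = 0")
    case True thus ?thesis by (simp add: f_def g_def c_def bdef)
  next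
    case False
    have "acoef k (Cyc 1) (Cyc (j+1)) = 2 * int k + 1 - 2 * int j"
      using False that by auto
    thus ?thesis using False by (simp add: f_def g_def c_def bdef algebra_simps)
  qed
  have injc: "inj_on c {0..k}"
    by (auto simp: inj_on_def c_def split: if_splits)
  have injf: "inj_on f {0..k}"
  proof (rule inj_onI)
    fix i j assume ij: "i \<in> {0..k}" "j \<in> {0..k}" "f i = f j"
    hence "\<mu> * of_int (c i) = \<mu> * of_int (c j)" using fc by auto
    hence "c i = c j" using assms(4) by simp
    thus "i = j" using injc ij by (auto dest: inj_onD)
  qed
  have gV: "g j \<in> V" if "j \<le> k" for j
    using that inV CycV[of "j+1"] by (auto simp: g_def)
  have sub: "f ` {0..k} \<subseteq> (\<lambda>(x,y). x - y) ` (D \<times> D)"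
  proof
    fix x assume "x \<in> f ` {0..k}"
    then obtain j where j: "j \<le> k" "x = f j" by auto
    have "b (Cyc 1) (g j) \<in> D" "b S (g j) \<in> D" unfolding D_def using gV[OF j(1)] inV by auto
    thus "x \<in> (\<lambda>(x,y). x - y) ` (D \<times> D)" using j unfolding f_def
      by (auto intro!: image_eqI[where x="(b (Cyc 1) (g j), b S (g j))"])
  qed
  have "k + 1 = card (f ` {0..k})" using injf by (simp add: card_image)
  also have "\<dots> \<le> card ((\<lambda>(x,y). x - y) ` (D \<times> D))"
    using sub finD by (intro card_mono) auto
  also have "\<dots> \<le> card (D \<times> D)" using finD by (intro card_image_le) auto
  also have "\<dots> = card D * card D" by (simp add: card_cartesian_product)
  finally have "real (k+1) \<le> real (card D) * real (card D)" by (metis of_nat_le_iff of_nat_mult)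
  hence "sqrt (real (k+1)) \<le> sqrt (real (card D) * real (card D))" by (rule real_sqrt_le_mono)
  hence "sqrt (real (k+1)) \<le> real (card D)" by simp
  moreover have "(real n - 1) / 2 = real (k+1)" using nk by simp
  ultimately have P2: "real (card D) \<ge> sqrt ((real n - 1) / 2)" by metis
  show ?thesis using P1 P2 unfolding D_def b_def V_def by simp
qed

end
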